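(* Let $f$ be a biderivation of $\mathcal{SV}(0)$, and let $\phi,\psi:\mathcal{SV}(0)\to\mathcal{SV}(0)$ be linear maps and $\rho_1,\rho_2,\rho_3,\theta_1,\theta_2,\theta_3$ linear complex-valued functions on $\mathcal{SV}(0)$ such that for all $x,y$, $$f(x,y)=\sum_{i=1}^3\rho_i(x)D_i(y)+[\phi(x),y]=\sum_{i=1}^3\theta_i(y)D_i(x)+[x,\psi(y)].$$ Then there exist $\lambda\in\mathbb{C}$, numbers $s_0^{(m)},e_0^{(m)}\in\mathbb{C}$ ($m\in\mathbb{Z}$), and a family $\{\mu_k\in\mathbb{C}\mid k\in\mathbb{Z}\}$ with only finitely many nonzero $\mu_k$, such that for every $m\in\mathbb{Z}$ $$\phi(L_m)=\lambda L_m+\sum_{k\in\mathbb{Z}\setminus\{-m\}}\frac{\mu_k}{m+k}M_{m+k}+s_0^{(m)}M_0,\qquad \psi(L_m)=\lambda L_m-\sum_{k\in\mathbb{Z}\setminus\{-m\}}\frac{\mu_k}{m+k}M_{m+k}+e_0^{(m)}M_0.$$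
   Context: $\mathcal{SV}(0)$ is the complex Lie algebra with basis $\{L_i,Y_i,M_i\mid i\in\mathbb{Z}\}$ and brackets $[L_m,L_n]=(m-n)L_{m+n}$, $[L_m,Y_n]=(\frac12 m-n)Y_{m+n}$, $[L_m,M_n]=-nM_{m+n}$, $[Y_m,Y_n]=(m-n)M_{m+n}$, $[Y_m,M_n]=[M_m,M_n]=0$. A biderivation of a Lie algebra $L$ is a bilinear map $f:L\times L\to L$ with $f([x,y],z)=[x,f(y,z)]+[f(x,z),y]$ and $f(x,[y,z])=[f(x,y),z]+[y,f(x,z)]$ for all $x,y,z\in L$. The linear maps $D_1,D_2,D_3$ are defined by $D_1(L_m)=M_m$, $D_1(Y_m)=D_1(M_m)=0$; $D_2(L_m)=mM_m$, $D_2(Y_m)=D_2(M_m)=0$; $D_3(L_m)=0$, $D_3(Y_m)=Y_m$, $D_3(M_m)=2M_m$. *)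

theory Defs
  imports Complex_Main "HOL-Library.Function_Algebras"
begin

text \<open>Basis of SV(0): L_i, Y_i, M_i (i integer).  Elements of SV(0) are finitely
supported coefficient functions on the basis.\<close>

datatype sv_basis = L int | Y int | M int

definition SV :: "(sv_basis \<Rightarrow> complex) set" where
  "SV = {x. finite {b. x b \<noteq> 0}}"

definition sv_supp :: "(sv_basis \<Rightarrow> complex) \<Rightarrow> sv_basis set" where
  "sv_supp x = {b. x b \<noteq> 0}"

definition sv_e :: "sv_basis \<Rightarrow> sv_basis \<Rightarrow> complex" where
  "sv_e b = (\<lambda>c. if c = b then 1 else 0)"

definition sv_scale :: "complex \<Rightarrow> (sv_basis \<Rightarrow> complex) \<Rightarrow> sv_basis \<Rightarrow> complex" where
  "sv_scale c x = (\<lambda>b. c * x b)"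

fun sv_bb :: "sv_basis \<Rightarrow> sv_basis \<Rightarrow> sv_basis \<Rightarrow> complex" where
  "sv_bb (L m) (L n) = sv_scale (of_int (m - n)) (sv_e (L (m + n)))"
| "sv_bb (L m) (Y n) = sv_scale (of_int m / 2 - of_int n) (sv_e (Y (m + n)))"
| "sv_bb (L m) (M n) = sv_scale (- of_int n) (sv_e (M (m + n)))"
| "sv_bb (Y m) (L n) = sv_scale (- (of_int n / 2 - of_int m)) (sv_e (Y (m + n)))"
| "sv_bb (M m) (L n) = sv_scale (of_int m) (sv_e (M (m + n)))"
| "sv_bb (Y m) (Y n) = sv_scale (of_int (m - n)) (sv_e (M (m + n)))"
| "sv_bb (Y m) (M n) = 0"
| "sv_bb (M m) (Y n) = 0"
| "sv_bb (M m) (M n) = 0"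

definition sv_br :: "(sv_basis \<Rightarrow> complex) \<Rightarrow> (sv_basis \<Rightarrow> complex) \<Rightarrow> sv_basis \<Rightarrow> complex" where
  "sv_br x y = (\<Sum>a\<in>sv_supp x. \<Sum>b\<in>sv_supp y. sv_scale (x a * y b) (sv_bb a b))"

definition sv_linear_map :: "((sv_basis \<Rightarrow> complex) \<Rightarrow> (sv_basis \<Rightarrow> complex)) \<Rightarrow> bool" where
  "sv_linear_map g \<longleftrightarrow> (\<forall>x\<in>SV. g x \<in> SV) \<and>
     (\<forall>x\<in>SV. \<forall>y\<in>SV. g (x + y) = g x + g y) \<and>
     (\<forall>c. \<forall>x\<in>SV. g (sv_scale c x) = sv_scale c (g x))"

definition sv_linear_functional :: "((sv_basis \<Rightarrow> complex) \<Rightarrow> complex) \<Rightarrow> bool" where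
  "sv_linear_functional r \<longleftrightarrow>
     (\<forall>x\<in>SV. \<forall>y\<in>SV. r (x + y) = r x + r y) \<and>
     (\<forall>c. \<forall>x\<in>SV. r (sv_scale c x) = c * r x)"

definition sv_biderivation ::
  "((sv_basis \<Rightarrow> complex) \<Rightarrow> (sv_basis \<Rightarrow> complex) \<Rightarrow> (sv_basis \<Rightarrow> complex)) \<Rightarrow> bool" where
  "sv_biderivation f \<longleftrightarrow>
     (\<forall>x\<in>SV. \<forall>y\<in>SV. f x y \<in> SV) \<and>
     (\<forall>x\<in>SV. \<forall>y\<in>SV. \<forall>z\<in>SV. f (x + y) z = f x z + f y z \<and> f x (y + z) = f x y + f x z) \<and>
     (\<forall>c. \<forall>x\<in>SV. \<forall>y\<in>SV. f (sv_scale c x) y = sv_scale c (f x y) \<and> f x (sv_scale c y) = sv_scale c (f x y)) \<and>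
     (\<forall>x\<in>SV. \<forall>y\<in>SV. \<forall>z\<in>SV.
        f (sv_br x y) z = sv_br x (f y z) + sv_br (f x z) y \<and>
        f x (sv_br y z) = sv_br (f x y) z + sv_br y (f x z))"

definition sv_D1 :: "(sv_basis \<Rightarrow> complex) \<Rightarrow> sv_basis \<Rightarrow> complex" where
  "sv_D1 x = (\<lambda>b. case b of M m \<Rightarrow> x (L m) | _ \<Rightarrow> 0)"

definition sv_D2 :: "(sv_basis \<Rightarrow> complex) \<Rightarrow> sv_basis \<Rightarrow> complex" where
  "sv_D2 x = (\<lambda>b. case b of M m \<Rightarrow> of_int m * x (L m) | _ \<Rightarrow> 0)"

definition sv_D3 :: "(sv_basis \<Rightarrow> complex) \<Rightarrow> sv_basis \<Rightarrow> complex" where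
  "sv_D3 x = (\<lambda>b. case b of L m \<Rightarrow> 0 | Y m \<Rightarrow> x (Y m) | M m \<Rightarrow> 2 * x (M m))"

definition sv_D :: "nat \<Rightarrow> (sv_basis \<Rightarrow> complex) \<Rightarrow> sv_basis \<Rightarrow> complex" where
  "sv_D i = (if i = 1 then sv_D1 else if i = 2 then sv_D2 else sv_D3)"

end

theory Submission
  imports Defs
begin

lemma sum_fun_app: "finite S \<Longrightarrow> (sum g S) c = (\<Sum>i\<in>S. g i c)"
  by (induction S rule: finite_induct) auto

lemma sum_delta_one:
  assumes "finite S" "\<And>a. a \<in> S \<Longrightarrow> a \<noteq> z \<Longrightarrow> g a = 0" "z \<notin> S \<Longrightarrow> g z = 0"
  shows "sum g S = g z"
proof (cases "z \<in> S")
  case True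
  then have "sum g S = g z + sum g (S - {z})" using assms(1) by (simp add: sum.remove)
  also have "sum g (S - {z}) = 0" using assms(2) by (intro sum.neutral) auto
  finally show ?thesis by simp
next
  case False
  then show ?thesis using assms by (metis sum.neutral)
qed

lemma supp_e: "sv_supp (sv_e b) = {b}"
  by (auto simp: sv_supp_def sv_e_def)

lemma e_SV: "sv_e b \<in> SV"
  by (simp add: SV_def sv_e_def)

lemma SV_fin: "x \<in> SV \<Longrightarrow> finite (sv_supp x)"
  by (simp add: SV_def sv_supp_def)

lemma br_e_right: "x \<in> SV \<Longrightarrow> sv_br x (sv_e b) c = (\<Sum>a\<in>sv_supp x. x a * sv_bb a b c)"
  unfolding sv_br_def supp_e
  by (simp add: sum_fun_app SV_fin sv_scale_def sv_e_def)

lemma br_e_left: "y \<in> SV \<Longrightarrow> sv_br (sv_e b) y c = (\<Sum>a\<in>sv_supp y. y a * sv_bb b a c)"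
  unfolding sv_br_def supp_e
  by (simp add: sum_fun_app SV_fin sv_scale_def sv_e_def)

lemma supp_zero: "a \<notin> sv_supp x \<Longrightarrow> x a = 0"
  by (simp add: sv_supp_def)

lemma brR_L: assumes "x \<in> SV"
  shows "sv_br x (sv_e (L n)) (L t) = x (L (t-n)) * of_int (t - n - n)"
  unfolding br_e_right[OF assms]
  apply (rule trans[OF sum_delta_one[where z="L (t-n)"]])
  using assms apply (simp add: SV_fin)
  subgoal for a by (cases a) (auto simp: sv_scale_def sv_e_def)
  apply (simp add: supp_zero)
  by (simp add: sv_scale_def sv_e_def)

lemma brR_Y: assumes "x \<in> SV"
  shows "sv_br x (sv_e (L n)) (Y t) = x (Y (t-n)) * (- (of_int n / 2 - of_int (t-n)))"
  unfolding br_e_right[OF assms]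
  apply (rule trans[OF sum_delta_one[where z="Y (t-n)"]])
  using assms apply (simp add: SV_fin)
  subgoal for a by (cases a) (auto simp: sv_scale_def sv_e_def)
  apply (simp add: supp_zero)
  by (simp add: sv_scale_def sv_e_def)

lemma brR_M: assumes "x \<in> SV"
  shows "sv_br x (sv_e (L n)) (M t) = x (M (t-n)) * of_int (t-n)"
  unfolding br_e_right[OF assms]
  apply (rule trans[OF sum_delta_one[where z="M (t-n)"]])
  using assms apply (simp add: SV_fin)
  subgoal for a by (cases a) (auto simp: sv_scale_def sv_e_def)
  apply (simp add: supp_zero)
  by (simp add: sv_scale_def sv_e_def)

lemma brL_L: assumes "y \<in> SV"
  shows "sv_br (sv_e (L m)) y (L t) = y (L (t-m)) * of_int (m - (t - m))"
  unfolding br_e_left[OF assms]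
  apply (rule trans[OF sum_delta_one[where z="L (t-m)"]])
  using assms apply (simp add: SV_fin)
  subgoal for a by (cases a) (auto simp: sv_scale_def sv_e_def)
  apply (simp add: supp_zero)
  by (simp add: sv_scale_def sv_e_def)

lemma brL_Y: assumes "y \<in> SV"
  shows "sv_br (sv_e (L m)) y (Y t) = y (Y (t-m)) * (of_int m / 2 - of_int (t-m))"
  unfolding br_e_left[OF assms]
  apply (rule trans[OF sum_delta_one[where z="Y (t-m)"]])
  using assms apply (simp add: SV_fin)
  subgoal for a by (cases a) (auto simp: sv_scale_def sv_e_def)
  apply (simp add: supp_zero)
  by (simp add: sv_scale_def sv_e_def)

lemma brL_M: assumes "y \<in> SV"
  shows "sv_br (sv_e (L m)) y (M t) = y (M (t-m)) * (- of_int (t-m))"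
  unfolding br_e_left[OF assms]
  apply (rule trans[OF sum_delta_one[where z="M (t-m)"]])
  using assms apply (simp add: SV_fin)
  subgoal for a by (cases a) (auto simp: sv_scale_def sv_e_def)
  apply (simp add: supp_zero)
  by (simp add: sv_scale_def sv_e_def)

lemma Dsum_zero: "c \<noteq> M n \<Longrightarrow>
  (\<Sum>i\<in>{1..3::nat}. sv_scale (r i) (sv_D i (sv_e (L n)))) c = 0"
  apply (subst sum_fun_app, simp)
  apply (rule sum.neutral)
  by (auto simp: sv_scale_def sv_D_def sv_D1_def sv_D2_def sv_D3_def sv_e_def split: sv_basis.split)

lemma sumM_eval:
  assumes "finite {k. \<mu> k \<noteq> 0}"
  shows "(\<Sum>k\<in>{k. \<mu> k \<noteq> 0 \<and> k \<noteq> - m}. sv_scale (\<mu> k / of_int (m + k)) (sv_e (M (m + k)))) c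
     = (case c of M j \<Rightarrow> \<mu> (j - m) / of_int j | _ \<Rightarrow> 0)"
proof -
  have fK: "finite {k. \<mu> k \<noteq> 0 \<and> k \<noteq> - m}" by (rule finite_subset[OF _ assms]) auto
  show ?thesis
  proof (cases c)
    case (M j)
    show ?thesis unfolding sum_fun_app[OF fK] M
      apply (rule trans[OF sum_delta_one[where z="j - m"]])
      using fK apply simp
        apply (auto simp: sv_scale_def sv_e_def)
      done
  qed (auto simp: sum_fun_app[OF fK] sv_scale_def sv_e_def)
qed

theorem lemma3p2:
  fixes f :: "(sv_basis \<Rightarrow> complex) \<Rightarrow> (sv_basis \<Rightarrow> complex) \<Rightarrow> (sv_basis \<Rightarrow> complex)"
    and \<phi> \<psi> :: "(sv_basis \<Rightarrow> complex) \<Rightarrow> (sv_basis \<Rightarrow> complex)"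
    and \<rho> \<theta> :: "nat \<Rightarrow> (sv_basis \<Rightarrow> complex) \<Rightarrow> complex"
  assumes bider: "sv_biderivation f"
    and lin_phi: "sv_linear_map \<phi>"
    and lin_psi: "sv_linear_map \<psi>"
    and lin_rho: "\<And>i. i \<in> {1..3} \<Longrightarrow> sv_linear_functional (\<rho> i)"
    and lin_theta: "\<And>i. i \<in> {1..3} \<Longrightarrow> sv_linear_functional (\<theta> i)"
    and f_left: "\<And>x y. x \<in> SV \<Longrightarrow> y \<in> SV \<Longrightarrow>
       f x y = (\<Sum>i\<in>{1..3}. sv_scale (\<rho> i x) (sv_D i y)) + sv_br (\<phi> x) y"
    and f_right: "\<And>x y. x \<in> SV \<Longrightarrow> y \<in> SV \<Longrightarrow>
       f x y = (\<Sum>i\<in>{1..3}. sv_scale (\<theta> i y) (sv_D i x)) + sv_br x (\<psi> y)"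
  shows "\<exists>(lam::complex) (s::int \<Rightarrow> complex) (e::int \<Rightarrow> complex) (\<mu>::int \<Rightarrow> complex).
           finite {k. \<mu> k \<noteq> 0} \<and>
           (\<forall>m::int.
              \<phi> (sv_e (L m)) = sv_scale lam (sv_e (L m))
                 + (\<Sum>k\<in>{k. \<mu> k \<noteq> 0 \<and> k \<noteq> - m}. sv_scale (\<mu> k / of_int (m + k)) (sv_e (M (m + k))))
                 + sv_scale (s m) (sv_e (M 0)) \<and>
              \<psi> (sv_e (L m)) = sv_scale lam (sv_e (L m))
                 - (\<Sum>k\<in>{k. \<mu> k \<noteq> 0 \<and> k \<noteq> - m}. sv_scale (\<mu> k / of_int (m + k)) (sv_e (M (m + k))))
                 + sv_scale (e m) (sv_e (M 0)))"
proof -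
  define P where "P m = \<phi> (sv_e (L m))" for m
  define Q where "Q m = \<psi> (sv_e (L m))" for m
  have PSV: "P m \<in> SV" for m using lin_phi e_SV by (simp add: P_def sv_linear_map_def)
  have QSV: "Q m \<in> SV" for m using lin_psi e_SV by (simp add: Q_def sv_linear_map_def)
  have core: "sv_br (P m) (sv_e (L n)) c = sv_br (sv_e (L m)) (Q n) c"
    if "c \<noteq> M n" "c \<noteq> M m" for m n c
  proof -
    have "(\<Sum>i\<in>{1..3}. sv_scale (\<rho> i (sv_e (L m))) (sv_D i (sv_e (L n)))) + sv_br (P m) (sv_e (L n))
       = (\<Sum>i\<in>{1..3}. sv_scale (\<theta> i (sv_e (L n))) (sv_D i (sv_e (L m)))) + sv_br (sv_e (L m)) (Q n)"
      using f_left[OF e_SV e_SV, of "L m" "L n"] f_right[OF e_SV e_SV, of "L m" "L n"]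
      by (simp add: P_def Q_def)
    then have "((\<Sum>i\<in>{1..3}. sv_scale (\<rho> i (sv_e (L m))) (sv_D i (sv_e (L n)))) + sv_br (P m) (sv_e (L n))) c
       = ((\<Sum>i\<in>{1..3}. sv_scale (\<theta> i (sv_e (L n))) (sv_D i (sv_e (L m)))) + sv_br (sv_e (L m)) (Q n)) c"
      by simp
    then show ?thesis using Dsum_zero that by simp
  qed
  have EL: "P m (L (t-n)) * of_int (t - n - n) = Q n (L (t-m)) * of_int (m - (t - m))" for m n t
    using core[of "L t" n m] brR_L[OF PSV] brL_L[OF QSV] by simp
  have EY: "P m (Y (t-n)) * (- (of_int n / 2 - of_int (t-n))) = Q n (Y (t-m)) * (of_int m / 2 - of_int (t-m))" for m n t
    using core[of "Y t" n m] brR_Y[OF PSV] brL_Y[OF QSV] by simp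
  have EM: "P m (M (t-n)) * of_int (t-n) = Q n (M (t-m)) * (- of_int (t-m))" if "t \<noteq> n" "t \<noteq> m" for m n t
    using core[of "M t" n m] brR_M[OF PSV] brL_M[OF QSV] that by simp
  have QLoff: "Q n (L j) = 0" if "j \<noteq> n" for n j
  proof -
    have "P (n - (j - n)) (L (2*n - n)) * of_int (2*n - n - n) = Q n (L (2*n - (n - (j-n)))) * of_int ((n - (j-n)) - (2*n - (n - (j-n))))"
      by (rule EL)
    then show ?thesis using that by (auto simp: algebra_simps)
  qed
  have PLoff: "P m (L j) = 0" if "j \<noteq> m" for m j
  proof -
    have "P m (L (j + (j+1) - (j+1))) * of_int (j + (j+1) - (j+1) - (j+1)) = Q (j+1) (L (j + (j+1) - m)) * of_int (m - (j + (j+1) - m))"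
      by (rule EL)
    then show ?thesis using QLoff[of "j + (j+1) - m" "j+1"] that by simp
  qed
  define lam where "lam = P 0 (L 0)"
  have diag: "P m (L m) = Q n (L n)" if "m \<noteq> n" for m n
  proof -
    have "P m (L (m + n - n)) * of_int (m + n - n - n) = Q n (L (m + n - m)) * of_int (m - (m + n - m))"
      by (rule EL)
    then show ?thesis using that by simp
  qed
  have PLd: "P m (L m) = lam" for m
  proof -
    have "P m (L m) = Q (\<bar>m\<bar>+1) (L (\<bar>m\<bar>+1))" by (rule diag) auto
    also have "\<dots> = lam" unfolding lam_def by (rule diag[symmetric]) auto
    finally show ?thesis .
  qed
  have QLd: "Q n (L n) = lam" for n
    using diag[of "n+1" n] PLd by simp
  have PY1: "P (2*j') (Y j) = 0" if "j \<noteq> j'" for j j'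
  proof -
    have "P (2*j') (Y (3*j' - (3*j' - j))) * (- (of_int (3*j'-j) / 2 - of_int (3*j' - (3*j'-j)))) = Q (3*j'-j) (Y (3*j' - 2*j')) * (of_int (2*j') / 2 - of_int (3*j' - 2*j'))"
      by (rule EY)
    then have "P (2*j') (Y j) * (- (of_int (3*j'-j) / 2 - of_int j)) = 0" by simp
    moreover have "(- (of_int (3*j'-j) / 2 - of_int j) :: complex) \<noteq> 0"
    proof
      assume "(- (of_int (3*j'-j) / 2 - of_int j) :: complex) = 0"
      then have "(of_int (3*j'-j) :: complex) = of_int (2*j)" by (simp add: field_simps)
      then have "3*j'-j = 2*j" using of_int_eq_iff by blast
      then show False using that by simp
    qed
    ultimately show ?thesis by simp
  qed
  have QY: "Q n (Y j') = 0" for n j'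
  proof -
    define w where "w = \<bar>n - j'\<bar> + \<bar>j'\<bar> + 1"
    have "P (2*w) (Y ((j' + 2*w) - n)) * (- (of_int n / 2 - of_int ((j' + 2*w) - n))) = Q n (Y ((j' + 2*w) - 2*w)) * (of_int (2*w) / 2 - of_int ((j' + 2*w) - 2*w))"
      by (rule EY)
    moreover have "P (2*w) (Y ((j' + 2*w) - n)) = 0" by (rule PY1) (auto simp: w_def)
    ultimately have "Q n (Y j') * (of_int w - of_int j') = 0" by simp
    moreover have "w \<noteq> j'" by (auto simp: w_def)
    ultimately show ?thesis by simp
  qed
  have PY: "P m (Y j) = 0" for m j
  proof -
    have "P m (Y ((j + (2*j+1)) - (2*j+1))) * (- (of_int (2*j+1) / 2 - of_int ((j + (2*j+1)) - (2*j+1)))) = Q (2*j+1) (Y ((j + (2*j+1)) - m)) * (of_int m / 2 - of_int ((j + (2*j+1)) - m))"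
      by (rule EY)
    then have "P m (Y j) * (- (of_int (2*j+1) / 2 - of_int j)) = 0" by (simp add: QY)
    moreover have "(- (of_int (2*j+1) / 2 - of_int j) :: complex) = - 1/2" by (simp add: field_simps)
    ultimately show ?thesis by simp
  qed
  have G: "P m (M (m+k)) * of_int (m+k) = - (Q n (M (n+k)) * of_int (n+k))" if "m + k \<noteq> 0" "n + k \<noteq> 0" for m n k
    using EM[of "m+n+k" n m] that by (simp add: algebra_simps)
  define \<mu> where "\<mu> k = P (1-k) (M 1)" for k
  have B: "Q n (M (n+k)) * of_int (n+k) = - \<mu> k" if "n + k \<noteq> 0" for n k
    using G[of "1-k" k n] that by (simp add: \<mu>_def)
  have A: "P m (M (m+k)) * of_int (m+k) = \<mu> k" if "m + k \<noteq> 0" for m k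
    using G[of m k "1-k"] B[of "1-k" k] that by simp
  have fin: "finite {k. \<mu> k \<noteq> 0}"
  proof -
    have "{k. \<mu> k \<noteq> 0} \<subseteq> insert 0 (M -` sv_supp (Q 0))"
    proof
      fix k assume "k \<in> {k. \<mu> k \<noteq> 0}"
      then have "\<mu> k \<noteq> 0" by simp
      then show "k \<in> insert 0 (M -` sv_supp (Q 0))"
        using B[of 0 k] by (cases "k = 0") (auto simp: sv_supp_def)
    qed
    moreover have "finite (M -` sv_supp (Q 0))"
      by (rule finite_vimageI) (auto simp: SV_fin[OF QSV] inj_def)
    ultimately show ?thesis by (meson finite_insert finite_subset)
  qed
  have PM: "P m (M j) = \<mu> (j - m) / of_int j" if "j \<noteq> 0" for m j
    using A[of m "j - m"] that by (simp add: field_simps)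
  have QM: "Q m (M j) = - \<mu> (j - m) / of_int j" if "j \<noteq> 0" for m j
    using B[of m "j - m"] that by (simp add: field_simps)
  show ?thesis
  proof (intro exI conjI allI)
    show "finite {k. \<mu> k \<noteq> 0}" by (rule fin)
  next
    fix m
    show "\<phi> (sv_e (L m)) = sv_scale lam (sv_e (L m))
                 + (\<Sum>k\<in>{k. \<mu> k \<noteq> 0 \<and> k \<noteq> - m}. sv_scale (\<mu> k / of_int (m + k)) (sv_e (M (m + k))))
                 + sv_scale (P m (M 0)) (sv_e (M 0))"
      unfolding P_def[symmetric]
    proof
      fix c show "P m c = (sv_scale lam (sv_e (L m))
                 + (\<Sum>k\<in>{k. \<mu> k \<noteq> 0 \<and> k \<noteq> - m}. sv_scale (\<mu> k / of_int (m + k)) (sv_e (M (m + k))))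
                 + sv_scale (P m (M 0)) (sv_e (M 0))) c"
        unfolding plus_fun_apply sumM_eval[OF fin]
        by (cases c) (auto simp: sv_scale_def sv_e_def PLd PLoff PY PM)
    qed
    show "\<psi> (sv_e (L m)) = sv_scale lam (sv_e (L m))
                 - (\<Sum>k\<in>{k. \<mu> k \<noteq> 0 \<and> k \<noteq> - m}. sv_scale (\<mu> k / of_int (m + k)) (sv_e (M (m + k))))
                 + sv_scale (Q m (M 0)) (sv_e (M 0))"
      unfolding Q_def[symmetric]
    proof
      fix c show "Q m c = (sv_scale lam (sv_e (L m))
                 - (\<Sum>k\<in>{k. \<mu> k \<noteq> 0 \<and> k \<noteq> - m}. sv_scale (\<mu> k / of_int (m + k)) (sv_e (M (m + k))))
                 + sv_scale (Q m (M 0)) (sv_e (M 0))) c"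
        unfolding plus_fun_apply minus_apply sumM_eval[OF fin]
        by (cases c) (auto simp: sv_scale_def sv_e_def QLd QLoff QY QM)
    qed
  qed
qed

end
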